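(* Let $(X,d,f)$ be a dynamical system and $\mathcal{A}=\{\mathcal{U}_n\}_{n\in\mathbb{N}}$ a tame defining sequence of $(X,d)$, and assume that for some $n$ the partition $\mathcal{U}_n$ consists of compact sets. Then if $f$ is uniformly continuous, $f$ has the shadowing property if and only if it has the finite shadowing property.
   Context: Spaces are nonempty separable metrizable; $d$ admissible, $f$ continuous. A partition is a cover by pairwise disjoint nonempty clopen sets. A defining sequence is a sequence of partitions $\{\mathcal{U}_n\}$, each refining the previous, whose union is a basis; tame if $\sup\{\operatorname{diam}O:O\in\mathcal{U}_n\}\to0$ and each $\mathcal{U}_n$ is $\rho_n$-separated for some $\rho_n>0$ (points in distinct elements are at distance $\ge\rho_n$). A $\delta$-pseudo-orbit is a finite or infinite sequence $(x_i)$ with $d(f(x_i),x_{i+1})<\delta$; $x$ $\varepsilon$-shadows it if $d(f^i(x),x_i)<\varepsilon$ for all indices. Finite shadowing: $\forall\varepsilon>0\,\exists\delta>0$ every finite $\delta$-pseudo-orbit is $\varepsilon$-shadowed; shadowing: same for infinite pseudo-orbits. *)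

theory Defs
  imports "HOL-Analysis.Analysis"
begin

definition separable_set :: "'a::metric_space set \<Rightarrow> bool" where
  "separable_set X \<longleftrightarrow> (\<exists>D. countable D \<and> D \<subseteq> X \<and> X \<subseteq> closure D)"

definition dyn_system :: "'a::metric_space set \<Rightarrow> ('a \<Rightarrow> 'a) \<Rightarrow> bool" where
  "dyn_system X f \<longleftrightarrow> X \<noteq> {} \<and> separable_set X \<and> f ` X \<subseteq> X \<and> continuous_on X f"

definition is_partition :: "'a::metric_space set \<Rightarrow> 'a set set \<Rightarrow> bool" where
  "is_partition X P \<longleftrightarrow> \<Union>P = X \<and>
     (\<forall>B\<in>P. B \<noteq> {} \<and> openin (top_of_set X) B \<and> closedin (top_of_set X) B) \<and>
     (\<forall>B\<in>P. \<forall>B'\<in>P. B \<noteq> B' \<longrightarrow> B \<inter> B' = {})"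

definition refines :: "'a set set \<Rightarrow> 'a set set \<Rightarrow> bool" where
  "refines P Q \<longleftrightarrow> (\<forall>B\<in>P. \<exists>B'\<in>Q. B \<subseteq> B')"

definition defining_sequence :: "'a::metric_space set \<Rightarrow> (nat \<Rightarrow> 'a set set) \<Rightarrow> bool" where
  "defining_sequence X U \<longleftrightarrow> (\<forall>n. is_partition X (U n)) \<and> (\<forall>n. refines (U (Suc n)) (U n)) \<and>
     (\<forall>V x. openin (top_of_set X) V \<longrightarrow> x \<in> V \<longrightarrow> (\<exists>n. \<exists>B\<in>U n. x \<in> B \<and> B \<subseteq> V))"

definition separated_by :: "real \<Rightarrow> 'a::metric_space set set \<Rightarrow> bool" where
  "separated_by \<rho> P \<longleftrightarrow> (\<forall>B\<in>P. \<forall>B'\<in>P. B \<noteq> B' \<longrightarrow> (\<forall>x\<in>B. \<forall>y\<in>B'. dist x y \<ge> \<rho>))"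

text \<open>Tame: sup of diameters tends to 0 (written out: eventually all elements are bounded
with diameter at most any given epsilon), and each partition is rho_n-separated.\<close>
definition tame_defining_sequence :: "'a::metric_space set \<Rightarrow> (nat \<Rightarrow> 'a set set) \<Rightarrow> bool" where
  "tame_defining_sequence X U \<longleftrightarrow> defining_sequence X U \<and>
     (\<forall>\<epsilon>>0. \<exists>N. \<forall>n\<ge>N. \<forall>B\<in>U n. bounded B \<and> diameter B \<le> \<epsilon>) \<and>
     (\<forall>n. \<exists>\<rho>>0. separated_by \<rho> (U n))"

definition finite_pseudo_orbit :: "'a::metric_space set \<Rightarrow> ('a \<Rightarrow> 'a) \<Rightarrow> real \<Rightarrow> nat \<Rightarrow> (nat \<Rightarrow> 'a) \<Rightarrow> bool" where
  "finite_pseudo_orbit X f \<delta> k x \<longleftrightarrow> (\<forall>i\<le>k. x i \<in> X) \<and> (\<forall>i<k. dist (f (x i)) (x (Suc i)) < \<delta>)"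

definition pseudo_orbit :: "'a::metric_space set \<Rightarrow> ('a \<Rightarrow> 'a) \<Rightarrow> real \<Rightarrow> (nat \<Rightarrow> 'a) \<Rightarrow> bool" where
  "pseudo_orbit X f \<delta> x \<longleftrightarrow> (\<forall>i. x i \<in> X) \<and> (\<forall>i. dist (f (x i)) (x (Suc i)) < \<delta>)"

definition finite_shadowing :: "'a::metric_space set \<Rightarrow> ('a \<Rightarrow> 'a) \<Rightarrow> bool" where
  "finite_shadowing X f \<longleftrightarrow> (\<forall>\<epsilon>>0. \<exists>\<delta>>0. \<forall>k x. finite_pseudo_orbit X f \<delta> k x \<longrightarrow>
      (\<exists>z\<in>X. \<forall>i\<le>k. dist ((f ^^ i) z) (x i) < \<epsilon>))"

definition shadowing :: "'a::metric_space set \<Rightarrow> ('a \<Rightarrow> 'a) \<Rightarrow> bool" where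
  "shadowing X f \<longleftrightarrow> (\<forall>\<epsilon>>0. \<exists>\<delta>>0. \<forall>x. pseudo_orbit X f \<delta> x \<longrightarrow>
      (\<exists>z\<in>X. \<forall>i. dist ((f ^^ i) z) (x i) < \<epsilon>))"

end

theory Submission
  imports Defs
begin

lemma funpow_in:
  assumes "f ` X \<subseteq> X" "x \<in> X" shows "(f ^^ m) x \<in> X"
  using assms by (induction m) auto

lemma funpow_cont:
  assumes "f ` X \<subseteq> X" "continuous_on X f" shows "continuous_on X (f ^^ m)"
proof (induction m)
  case 0 then show ?case by (simp add: continuous_on_id)
next
  case (Suc m)
  have "continuous_on X (f \<circ> (f ^^ m))"
    by (rule continuous_on_compose[OF Suc]) (metis assms continuous_on_subset image_subsetI funpow_in)
  then show ?case by simp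
qed

lemma sh_to_fin:
  assumes fX: "f ` X \<subseteq> X" and sh: "shadowing X f"
  shows "finite_shadowing X f"
  unfolding finite_shadowing_def
proof (intro allI impI)
  fix \<epsilon> :: real assume "\<epsilon> > 0"
  then obtain \<delta> where d: "\<delta> > 0" "\<forall>x. pseudo_orbit X f \<delta> x \<longrightarrow> (\<exists>z\<in>X. \<forall>i. dist ((f ^^ i) z) (x i) < \<epsilon>)"
    using sh unfolding shadowing_def by blast
  show "\<exists>\<delta>>0. \<forall>k x. finite_pseudo_orbit X f \<delta> k x \<longrightarrow> (\<exists>z\<in>X. \<forall>i\<le>k. dist ((f ^^ i) z) (x i) < \<epsilon>)"
  proof (intro exI[of _ \<delta>] conjI allI impI)
    show "\<delta> > 0" by fact
    fix k x assume fp: "finite_pseudo_orbit X f \<delta> k x"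
    define y where "y i = (if i \<le> k then x i else (f ^^ (i - k)) (x k))" for i
    have xk: "x k \<in> X" using fp unfolding finite_pseudo_orbit_def by auto
    have "pseudo_orbit X f \<delta> y"
      unfolding pseudo_orbit_def
    proof (intro conjI allI)
      fix i show "y i \<in> X" using fp xk funpow_in[OF fX] unfolding y_def finite_pseudo_orbit_def by auto
    next
      fix i show "dist (f (y i)) (y (Suc i)) < \<delta>"
      proof (cases "i < k")
        case True then show ?thesis using fp unfolding y_def finite_pseudo_orbit_def by auto
      next
        case False
        then have "Suc i - k = Suc (i - k)" by auto
        then have "y (Suc i) = f (y i)" using False unfolding y_def by auto
        then show ?thesis using d by simp
      qed
    qed
    then obtain z where "z \<in> X" "\<forall>i. dist ((f ^^ i) z) (y i) < \<epsilon>" using d by blast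
    then show "\<exists>z\<in>X. \<forall>i\<le>k. dist ((f ^^ i) z) (x i) < \<epsilon>" unfolding y_def by (metis)
  qed
qed

lemma fin_to_sh:
  assumes fX: "f ` X \<subseteq> X" and fc: "continuous_on X f" and fs: "finite_shadowing X f"
    and part: "is_partition X P" and sep: "separated_by \<rho> P" and rho: "\<rho> > 0"
    and cpt: "\<forall>B\<in>P. compact B"
  shows "shadowing X f"
  unfolding shadowing_def
proof (intro allI impI)
  fix \<epsilon> :: real assume ep: "\<epsilon> > 0"
  define e where "e = min (\<epsilon>/2) \<rho>"
  have e: "e > 0" "e < \<epsilon>" "e \<le> \<rho>" using ep rho unfolding e_def by auto
  then obtain \<delta> where d: "\<delta> > 0" "\<forall>k x. finite_pseudo_orbit X f \<delta> k x \<longrightarrow> (\<exists>z\<in>X. \<forall>i\<le>k. dist ((f ^^ i) z) (x i) < e)"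
    using fs unfolding finite_shadowing_def by blast
  show "\<exists>\<delta>>0. \<forall>x. pseudo_orbit X f \<delta> x \<longrightarrow> (\<exists>z\<in>X. \<forall>i. dist ((f ^^ i) z) (x i) < \<epsilon>)"
  proof (intro exI[of _ \<delta>] conjI allI impI)
    show "\<delta> > 0" by fact
    fix x assume po: "pseudo_orbit X f \<delta> x"
    have "\<forall>k. \<exists>z. z \<in> X \<and> (\<forall>i\<le>k. dist ((f ^^ i) z) (x i) < e)"
    proof
      fix k
      have "finite_pseudo_orbit X f \<delta> k x" using po unfolding pseudo_orbit_def finite_pseudo_orbit_def by auto
      then show "\<exists>z. z \<in> X \<and> (\<forall>i\<le>k. dist ((f ^^ i) z) (x i) < e)" using d by blast
    qed
    then obtain zs where zs: "\<And>k. zs k \<in> X" "\<And>k i. i \<le> k \<Longrightarrow> dist ((f ^^ i) (zs k)) (x i) < e"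
      by metis
    have x0: "x 0 \<in> X" using po unfolding pseudo_orbit_def by auto
    then obtain B where B: "B \<in> P" "x 0 \<in> B" using part unfolding is_partition_def by auto
    have zB: "zs k \<in> B" for k
    proof -
      obtain B' where B': "B' \<in> P" "zs k \<in> B'" using part zs(1)[of k] unfolding is_partition_def by blast
      have "dist (x 0) (zs k) < \<rho>" using zs(2)[of 0 k] e by (simp add: dist_commute)
      then have "B = B'" using sep B B' unfolding separated_by_def by force
      then show ?thesis using B' by simp
    qed
    have "seq_compact B" using cpt B compact_imp_seq_compact by blast
    then obtain l r where l: "l \<in> B" "strict_mono r" "(zs \<circ> r) \<longlonglongrightarrow> l"
      using zB unfolding seq_compact_def by metis
    have lX: "l \<in> X" using l B part unfolding is_partition_def by auto
    show "\<exists>z\<in>X. \<forall>i. dist ((f ^^ i) z) (x i) < \<epsilon>"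
    proof (intro bexI[OF _ lX] allI)
      fix i
      have t1: "((\<lambda>j. (f ^^ i) ((zs \<circ> r) j)) \<longlonglongrightarrow> (f ^^ i) l)"
        by (rule continuous_on_tendsto_compose[OF funpow_cont[OF fX fc] l(3) lX]) (simp add: zs(1))
      have t2: "((\<lambda>j. dist ((f ^^ i) ((zs \<circ> r) j)) (x i)) \<longlonglongrightarrow> dist ((f ^^ i) l) (x i))"
        by (intro tendsto_dist t1 tendsto_const)
      have ev: "eventually (\<lambda>j. dist ((f ^^ i) ((zs \<circ> r) j)) (x i) \<le> e) sequentially"
        unfolding eventually_sequentially
      proof (intro exI[of _ i] allI impI)
        fix j assume "i \<le> j"
        then have "i \<le> r j" using seq_suble[OF l(2), of j] by linarith
        then show "dist ((f ^^ i) ((zs \<circ> r) j)) (x i) \<le> e" using zs(2) by (simp add: less_imp_le)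
      qed
      have "dist ((f ^^ i) l) (x i) \<le> e"
        by (rule tendsto_upperbound[OF t2 ev]) simp
      then show "dist ((f ^^ i) l) (x i) < \<epsilon>" using e by linarith
    qed
  qed
qed

theorem proposition4p19:
  fixes X :: "'a::metric_space set" and f :: "'a \<Rightarrow> 'a" and U :: "nat \<Rightarrow> 'a set set"
  assumes "dyn_system X f"
    and "tame_defining_sequence X U"
    and "\<exists>n. \<forall>B\<in>U n. compact B"
    and "uniformly_continuous_on X f"
  shows "shadowing X f \<longleftrightarrow> finite_shadowing X f"
proof -
  have fX: "f ` X \<subseteq> X" and fc: "continuous_on X f" using assms(1) unfolding dyn_system_def by auto
  obtain n where n: "\<forall>B\<in>U n. compact B" using assms(3) by blast
  have p: "is_partition X (U n)" using assms(2) unfolding tame_defining_sequence_def defining_sequence_def by auto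
  obtain \<rho> where r: "\<rho> > 0" "separated_by \<rho> (U n)" using assms(2) unfolding tame_defining_sequence_def by blast
  show ?thesis using sh_to_fin[OF fX] fin_to_sh[OF fX fc _ p r(2) r(1) n] by blast
qed

end
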